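(* Let $\{a_n\}_{n\ge1}$ and $\{b_n\}_{n\ge1}$ be sequences of complex numbers with $a_n\ne0$ for all $n$, and let $w_n(z)$ ($n\ge0$) be the $n$-th approximant of the continued fraction $$\cfrac{a_1}{z+b_1-\cfrac{a_2}{z+b_2-\cfrac{a_3}{z+b_3-\cdots}}},$$ i.e. $w_0=0$ and $w_n(z)=\cfrac{a_1}{z+b_1-\cfrac{a_2}{\ddots-\cfrac{a_n}{z+b_n}}}$. Then: (1) For every $n\ge0$, $w_n(z)$ is a rational function of degree $n$; for $n\ge1$, $w_n(z)\sim\frac{a_1}{z}$ $(z\to\infty)$ and $w_n(z)-w_{n-1}(z)\sim\frac{a_1a_2\cdots a_n}{z^{2n-1}}$ $(z\to\infty)$. In particular $\{w_n(z)-w_{n-1}(z)\}_{n\ge1}$ is an asymptotic sequence at $\infty$. (2) Let $f(z)$ be a complex-valued function defined on an unbounded subset $\mathfrak X$ of $\mathbb C\cup\{\infty\}$. The following are equivalent: (a) $f(z)\sim \cfrac{a_1}{z+b_1-\cfrac{a_2}{z+b_2-\cfrac{a_3}{z+b_3-\cdots}}}$ $(z\to\infty)_{\mathfrak X}$ (asymptotic continued fraction expansion); (b) for every positive integer $n$ one has $f(z)=\cfrac{a_1}{z+b_1-\cfrac{a_2}{\ddots -\cfrac{a_n}{z+b_n-f_n(z)}}}$ for some function $f_n(z)$ with $f_n(z)\sim\frac{a_{n+1}}{z}$ $(z\to\infty)_{\mathfrak X}$; (c) $f(z)-w_n(z)\sim\frac{a_1a_2\cdots a_{n+1}}{z^{2n+1}}$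 $(z\to\infty)_{\mathfrak X}$ for all $n\ge0$; (d) $f(z)-w_n(z)=O(z^{-(2n+1)})$ $(z\to\infty)_{\mathfrak X}$ for all $n\ge0$; (e) $f(z)-w_n(z)=O(z^{-(2n+1)})$ $(z\to\infty)_{\mathfrak X}$ for infinitely many $n\ge0$; (f) for every $n\ge0$, $w_n(z)$ is the unique rational function $w(z)\in\mathbb C(z)$ of degree at most $n$ such that $f(z)-w(z)=O(z^{-(2n+1)})$ $(z\to\infty)_{\mathfrak X}$; (g) for every $n\ge1$, $w_n(z)$ is the unique Padé approximant of $f(z)$ over $\mathfrak X$ at $z=\infty$ of order $[n-1,n]$. (3) If the equivalent conditions in (2) hold, then the best rational approximations of $f(z)$ over $\mathfrak X$ are precisely the approximants $w_n(z)$, $n\ge0$.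
   Context: All asymptotic relations are as $z\to\infty$ within $\mathfrak X$: $f=O(g)$ if $|f|\le M|g|$ on $U\cap\mathfrak X$ for some punctured neighbourhood $U$ of $\infty$ and some $M>0$; $f=o(g)$ if this holds for every $M>0$; $f\sim g$ if $f-g=o(g)$ and $g-f=o(f)$. A sequence $\{\varphi_n\}$ is an asymptotic sequence if $\varphi_{n+1}=o(\varphi_n)$ for all $n$. Asymptotic continued fraction expansion: $f\sim K$ means $\{w_n-w_{n-1}\}_{n\ge1}$ is an asymptotic sequence and $f-w_n=O(w_{n+1}-w_n)$ for all $n\ge0$ (equivalently $f\sim\sum_{n\ge1}(w_n-w_{n-1})$ as an asymptotic expansion of infinite order). The degree of a rational function is the maximum of the degrees of numerator and denominator in lowest terms. A rational function $w\in\mathbb C(z)$ is a best rational approximation of $f$ over $\mathfrak X$ if $w$ is the unique $v\in\mathbb C(z)$ of degree at most $\deg w$ with $f-v=O(f-w)$ $(z\to\infty)_{\mathfrak X}$. The Padé approximant of $f$ over $\mathfrak X$ at $\infty$ of order $[n-1,n]$ is the unique rational function $g(z)/h(z)$ with $g$ a polynomial of degree $\le n-1$ and $h$ a nonzero polynomial of degree $\le n$ such that $f(z)-g(z)/h(z)=O(z^{-(2n+1)})$ $(z\to\infty)_{\mathfrak X}$. *)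

theory Defs
  imports "HOL-Analysis.Analysis" "HOL-Library.Landau_Symbols"
          "HOL-Computational_Algebra.Polynomial_Factorial"
          "HOL-Computational_Algebra.Normalized_Fraction" "HOL-Computational_Algebra.Field_as_Ring"
begin

type_synonym ratfun = "complex poly fract"

definition rf_degree :: "ratfun \<Rightarrow> nat" where
  "rf_degree w = (case quot_of_fract w of (p, q) \<Rightarrow> max (degree p) (degree q))"

definition rf_eval :: "ratfun \<Rightarrow> complex \<Rightarrow> complex" where
  "rf_eval w z = (case quot_of_fract w of (p, q) \<Rightarrow> poly p z / poly q z)"

definition rf_z :: ratfun where "rf_z = to_fract [:0, 1:]"
definition rf_const :: "complex \<Rightarrow> ratfun" where "rf_const c = to_fract [:c:]"

text \<open>cf_rf a b n t = a1/(z+b1 - a2/( ... - an/(z+bn - t))) in C(z); cf_rf a b 0 t = t.\<close>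
fun cf_rf :: "(nat \<Rightarrow> complex) \<Rightarrow> (nat \<Rightarrow> complex) \<Rightarrow> nat \<Rightarrow> ratfun \<Rightarrow> ratfun" where
  "cf_rf a b 0 t = t"
| "cf_rf a b (Suc n) t =
     cf_rf a b n (rf_const (a (Suc n)) / (rf_z + rf_const (b (Suc n)) - t))"

definition approximant :: "(nat \<Rightarrow> complex) \<Rightarrow> (nat \<Rightarrow> complex) \<Rightarrow> nat \<Rightarrow> ratfun" where
  "approximant a b n = cf_rf a b n 0"

fun cf_fun :: "(nat \<Rightarrow> complex) \<Rightarrow> (nat \<Rightarrow> complex) \<Rightarrow> nat \<Rightarrow> complex \<Rightarrow> complex \<Rightarrow> complex" where
  "cf_fun a b 0 t z = t"
| "cf_fun a b (Suc n) t z = cf_fun a b n (a (Suc n) / (z + b (Suc n) - t)) z"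

definition at_inf_within :: "complex set \<Rightarrow> complex filter" where
  "at_inf_within X = inf at_infinity (principal X)"

definition asymptotic_sequence :: "complex filter \<Rightarrow> (nat \<Rightarrow> complex \<Rightarrow> complex) \<Rightarrow> bool" where
  "asymptotic_sequence F \<phi> \<longleftrightarrow> (\<forall>n. \<phi> (Suc n) \<in> o[F](\<phi> n))"

definition acf_expansion :: "complex filter \<Rightarrow> (complex \<Rightarrow> complex)
     \<Rightarrow> (nat \<Rightarrow> complex) \<Rightarrow> (nat \<Rightarrow> complex) \<Rightarrow> bool" where
  "acf_expansion F f a b \<longleftrightarrow>
     asymptotic_sequence F (\<lambda>n z. rf_eval (approximant a b (Suc n)) z - rf_eval (approximant a b n) z)
   \<and> (\<forall>n. (\<lambda>z. f z - rf_eval (approximant a b n) z)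
            \<in> O[F](\<lambda>z. rf_eval (approximant a b (Suc n)) z - rf_eval (approximant a b n) z))"

definition best_rat_approx :: "complex filter \<Rightarrow> (complex \<Rightarrow> complex) \<Rightarrow> ratfun \<Rightarrow> bool" where
  "best_rat_approx F f w \<longleftrightarrow>
     (\<forall>v. (rf_degree v \<le> rf_degree w \<and>
           (\<lambda>z. f z - rf_eval v z) \<in> O[F](\<lambda>z. f z - rf_eval w z)) \<longleftrightarrow> v = w)"

text \<open>Rational functions g/h (g of degree \<le> n-1, h \<noteq> 0 of degree \<le> n) with
  f - g/h = O(z^-(2n+1)); the Pade approximant of order [n-1,n] is the unique such one.\<close>
definition pade_candidates :: "complex filter \<Rightarrow> (complex \<Rightarrow> complex) \<Rightarrow> nat \<Rightarrow> ratfun set" where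
  "pade_candidates F f n = {to_fract g / to_fract h | g h.
      h \<noteq> 0 \<and> degree g \<le> n - 1 \<and> degree h \<le> n \<and>
      (\<lambda>z. f z - poly g z / poly h z) \<in> O[F](\<lambda>z. 1 / z ^ (2*n+1))}"

end

theory Submission
  imports Defs
begin

fun PP :: "(nat \<Rightarrow> complex) \<Rightarrow> (nat \<Rightarrow> complex) \<Rightarrow> nat \<Rightarrow> complex poly" where
  "PP a b 0 = 0"
| "PP a b (Suc 0) = [:a 1:]"
| "PP a b (Suc (Suc n)) = [:b (Suc (Suc n)), 1:] * PP a b (Suc n) - smult (a (Suc (Suc n))) (PP a b n)"

fun QQ :: "(nat \<Rightarrow> complex) \<Rightarrow> (nat \<Rightarrow> complex) \<Rightarrow> nat \<Rightarrow> complex poly" where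
  "QQ a b 0 = 1"
| "QQ a b (Suc 0) = [:b 1, 1:]"
| "QQ a b (Suc (Suc n)) = [:b (Suc (Suc n)), 1:] * QQ a b (Suc n) - smult (a (Suc (Suc n))) (QQ a b n)"

lemma field_aux: "(V::'a::field) \<noteq> 0 \<Longrightarrow> x / (y - U / V) = x * V / (y * V - U)"
proof -
  assume V: "V \<noteq> 0"
  have "y - U / V = (y * V - U) / V" using V by (simp add: field_simps)
  thus ?thesis by simp
qed

lemma rf_step:
  assumes "v \<noteq> 0"
  shows "rf_const c / (rf_z + rf_const d - to_fract u / to_fract v)
     = to_fract (smult c v) / to_fract ([:d, 1:] * v - u)"
proof -
  have e: "rf_z + rf_const d = to_fract [:d,1:]"
    unfolding rf_z_def rf_const_def to_fract_add[symmetric] by simp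
  have s: "smult c v = [:c:] * v" by simp
  show ?thesis unfolding e s using assms
    by (simp add: field_aux rf_const_def del: mult_pCons_left)
qed

lemma deg_step:
  fixes u v :: "complex poly"
  assumes "v \<noteq> 0" "degree u \<le> degree v"
  shows "degree ([:d, 1:] * v - u) = Suc (degree v)"
proof -
  have "degree ([:d, 1:] * v) = degree [:d, 1:] + degree v"
    by (rule degree_mult_eq) (use assms in auto)
  hence "degree ([:d, 1:] * v) = Suc (degree v)" by simp
  thus ?thesis using assms(2) degree_add_eq_left[of "-u" "[:d, 1:] * v"] by simp
qed

lemma cf_rf_formula:
  "v \<noteq> 0 \<Longrightarrow> degree u \<le> degree v \<Longrightarrow>
   cf_rf a b (Suc n) (to_fract u / to_fract v)
   = to_fract (PP a b (Suc n) * v - u * PP a b n) / to_fract (QQ a b (Suc n) * v - u * QQ a b n)"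
proof (induction n arbitrary: u v)
  case 0
  have "cf_rf a b (Suc 0) (to_fract u / to_fract v)
     = to_fract (smult (a 1) v) / to_fract ([:b 1, 1:] * v - u)"
    using rf_step[OF 0(1)] by simp
  then show ?case by simp
next
  case (Suc n)
  define u' where "u' = smult (a (Suc (Suc n))) v"
  define v' where "v' = [:b (Suc (Suc n)), 1:] * v - u"
  have dv: "degree v' = Suc (degree v)" unfolding v'_def by (rule deg_step[OF Suc.prems])
  hence v'0: "v' \<noteq> 0" by auto
  have du: "degree u' \<le> degree v'" using dv unfolding u'_def by simp
  have "cf_rf a b (Suc (Suc n)) (to_fract u / to_fract v)
      = cf_rf a b (Suc n) (to_fract u' / to_fract v')"
    using rf_step[OF Suc.prems(1)] unfolding u'_def v'_def by simp
  also have "\<dots> = to_fract (PP a b (Suc n) * v' - u' * PP a b n) / to_fract (QQ a b (Suc n) * v' - u' * QQ a b n)"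
    by (rule Suc.IH[OF v'0 du])
  also have "PP a b (Suc n) * v' - u' * PP a b n = PP a b (Suc (Suc n)) * v - u * PP a b (Suc n)"
    unfolding u'_def v'_def by (simp add: algebra_simps)
  also have "QQ a b (Suc n) * v' - u' * QQ a b n = QQ a b (Suc (Suc n)) * v - u * QQ a b (Suc n)"
    unfolding u'_def v'_def by (simp add: algebra_simps)
  finally show ?case .
qed

lemma approximant_eq: "approximant a b n = to_fract (PP a b n) / to_fract (QQ a b n)"
proof (cases n)
  case 0 thus ?thesis by (simp add: approximant_def)
next
  case (Suc m)
  have "approximant a b n = cf_rf a b (Suc m) (to_fract 0 / to_fract 1)"
    by (simp add: approximant_def Suc)
  also have "\<dots> = to_fract (PP a b n) / to_fract (QQ a b n)"
    by (subst cf_rf_formula) (auto simp: Suc)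
  finally show ?thesis .
qed


lemma QQ_deg_coeff: "degree (QQ a b n) \<le> n \<and> coeff (QQ a b n) n = 1"
proof (induction a b n rule: QQ.induct)
  case (3 a b n)
  have d: "degree (QQ a b (Suc (Suc n))) \<le> Suc (Suc n)"
    using 3 by (auto intro!: degree_diff_le degree_add_le order.trans[OF degree_pCons_le] order.trans[OF degree_smult_le])
  have "coeff (QQ a b (Suc n)) (Suc (Suc n)) = 0" "coeff (QQ a b n) (Suc (Suc n)) = 0"
    using 3 by (auto intro!: coeff_eq_0)
  then have "coeff (QQ a b (Suc (Suc n))) (Suc (Suc n)) = 1" using 3 by simp
  with d show ?case by simp
qed auto

lemma PP_deg_coeff: "degree (PP a b n) \<le> n - 1 \<and> (n \<ge> 1 \<longrightarrow> coeff (PP a b n) (n - 1) = a 1)"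
proof (induction a b n rule: PP.induct)
  case (3 a b n)
  have d: "degree (PP a b (Suc (Suc n))) \<le> Suc n"
    using 3 by (auto intro!: degree_diff_le degree_add_le order.trans[OF degree_pCons_le] order.trans[OF degree_smult_le])
  have "coeff (PP a b (Suc n)) (Suc n) = 0" "coeff (PP a b n) (Suc n) = 0"
    using 3 by (auto intro!: coeff_eq_0)
  then have "coeff (PP a b (Suc (Suc n))) (Suc n) = a 1" using 3 by simp
  with d show ?case by simp
qed auto

lemma QQ_degree: "degree (QQ a b n) = n"
  using QQ_deg_coeff[of a b n] le_degree[of "QQ a b n" n] by force

lemma QQ_lead: "lead_coeff (QQ a b n) = 1"
  using QQ_deg_coeff[of a b n] QQ_degree[of a b n] by simp

lemma QQ_nz: "QQ a b n \<noteq> 0"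
  using QQ_lead[of a b n] by auto

lemma PP_degree: "n \<ge> 1 \<Longrightarrow> a 1 \<noteq> 0 \<Longrightarrow> degree (PP a b n) = n - 1"
  using PP_deg_coeff[of a b n] le_degree[of "PP a b n" "n - 1"] by force

lemma PP_lead: "n \<ge> 1 \<Longrightarrow> a 1 \<noteq> 0 \<Longrightarrow> lead_coeff (PP a b n) = a 1"
  using PP_deg_coeff[of a b n] PP_degree[of n a b] by simp

lemma PP_degree_le: "degree (PP a b n) \<le> n - 1"
  using PP_deg_coeff[of a b n] by simp

lemma det_PQ: "PP a b (Suc n) * QQ a b n - PP a b n * QQ a b (Suc n) = [:\<Prod>k=1..Suc n. a k:]"
proof (induction n)
  case 0 then show ?case by simp
next
  case (Suc n)
  have "PP a b (Suc (Suc n)) * QQ a b (Suc n) - PP a b (Suc n) * QQ a b (Suc (Suc n))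
     = smult (a (Suc (Suc n))) (PP a b (Suc n) * QQ a b n - PP a b n * QQ a b (Suc n))"
    by (simp add: algebra_simps smult_diff_right)
  also have "\<dots> = [:\<Prod>k=1..Suc (Suc n). a k:]"
    using Suc by (simp add: prod.nat_ivl_Suc')
  finally show ?case .
qed

lemma coprime_PQ:
  assumes "\<And>n. n \<ge> 1 \<Longrightarrow> a n \<noteq> 0"
  shows "coprime (PP a b n) (QQ a b n)"
proof (cases n)
  case 0 then show ?thesis by simp
next
  case (Suc m)
  have pnz: "(\<Prod>k=1..Suc m. a k) \<noteq> 0" using assms by (simp add: prod_zero_iff)
  show ?thesis
  proof (rule coprimeI)
    fix c assume c1: "c dvd PP a b n" and c2: "c dvd QQ a b n"
    have "c dvd PP a b (Suc m) * QQ a b m - PP a b m * QQ a b (Suc m)"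
      using c1 c2 Suc by (intro dvd_diff dvd_mult2 dvd_mult) auto
    hence "c dvd [:\<Prod>k=1..Suc m. a k:]" by (simp only: det_PQ)
    moreover have "is_unit [:\<Prod>k=1..Suc m. a k:]" unfolding is_unit_const_poly_iff dvd_field_iff using pnz by blast
    ultimately show "is_unit c" by (rule dvd_unit_imp_unit)
  qed
qed

lemma quot_approx:
  assumes "\<And>n. n \<ge> 1 \<Longrightarrow> a n \<noteq> 0"
  shows "quot_of_fract (approximant a b n) = (PP a b n, QQ a b n)"
proof -
  have "approximant a b n = quot_to_fract (PP a b n, QQ a b n)"
    by (simp add: approximant_eq quot_to_fract_def Fract_conv_to_fract)
  moreover have "(PP a b n, QQ a b n) \<in> normalized_fracts"
    using coprime_PQ[OF assms] QQ_lead[of a b n]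
    by (simp add: normalized_fracts_def unit_factor_poly_def)
  ultimately show ?thesis by (simp add: quot_of_fract_quot_to_fract')
qed

lemma rf_degree_approx:
  assumes "\<And>n. n \<ge> 1 \<Longrightarrow> a n \<noteq> 0"
  shows "rf_degree (approximant a b n) = n"
  using PP_degree_le[of a b n] QQ_degree[of a b n]
  by (simp add: rf_degree_def quot_approx[OF assms])

lemma rf_eval_approx:
  assumes "\<And>n. n \<ge> 1 \<Longrightarrow> a n \<noteq> 0"
  shows "rf_eval (approximant a b n) z = poly (PP a b n) z / poly (QQ a b n) z"
  by (simp add: rf_eval_def quot_approx[OF assms])

lemma rf_eval_gen: "rf_eval v z = poly (fst (quot_of_fract v)) z / poly (snd (quot_of_fract v)) z"
  by (simp add: rf_eval_def case_prod_unfold)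

lemma rf_degree_gen: "rf_degree v = max (degree (fst (quot_of_fract v))) (degree (snd (quot_of_fract v)))"
  by (simp add: rf_degree_def case_prod_unfold)



lemma field_aux2:
  fixes d :: "'a::field"
  assumes "d \<noteq> 0"
  shows "(x - (c / d) * y) / (u - (c / d) * w) = (x * d - c * y) / (u * d - c * w)"
proof -
  have 1: "x - (c / d) * y = (x * d - c * y) / d" using assms by (simp add: field_simps)
  have 2: "u - (c / d) * w = (u * d - c * w) / d" using assms by (simp add: field_simps)
  show ?thesis unfolding 1 2 using assms by simp
qed

lemma cf_fun_formula:
  assumes "norm t \<le> 1" "\<forall>k\<in>{1..Suc n}. norm z \<ge> norm (a k) + norm (b k) + 2"
  shows "cf_fun a b (Suc n) t z = (poly (PP a b (Suc n)) z - t * poly (PP a b n) z)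
              / (poly (QQ a b (Suc n)) z - t * poly (QQ a b n) z)"
  using assms
proof (induction n arbitrary: t)
  case 0 then show ?case by (simp add: algebra_simps)
next
  case (Suc n)
  define a' where "a' = a (Suc (Suc n))"
  define b' where "b' = b (Suc (Suc n))"
  define d where "d = z + b' - t"
  define s where "s = a' / d"
  have zb: "norm z \<ge> norm a' + norm b' + 2" using Suc.prems(2) unfolding a'_def b'_def by auto
  have "norm z \<le> norm d + norm b' + norm t" unfolding d_def
    using norm_triangle_ineq4[of "z + b'" t] norm_triangle_ineq4[of z "-b'"] by (simp add: norm_minus_commute) (smt (verit, ccfv_SIG) norm_diff_ineq norm_minus_commute norm_triangle_ineq2)
  hence dge: "norm d \<ge> norm a' + 1" using zb Suc.prems(1) by linarith
  hence d0: "d \<noteq> 0" using norm_ge_zero[of a'] by (auto simp del: norm_ge_zero)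
  have s1: "norm s \<le> 1" unfolding s_def using dge d0 by (simp add: norm_divide field_simps)
  have "cf_fun a b (Suc (Suc n)) t z = cf_fun a b (Suc n) s z"
    by (simp add: s_def a'_def d_def b'_def)
  also have "\<dots> = (poly (PP a b (Suc n)) z - s * poly (PP a b n) z)
              / (poly (QQ a b (Suc n)) z - s * poly (QQ a b n) z)"
    using Suc.IH[OF s1] Suc.prems(2) by auto
  also have "\<dots> = (poly (PP a b (Suc n)) z * d - a' * poly (PP a b n) z)
              / (poly (QQ a b (Suc n)) z * d - a' * poly (QQ a b n) z)"
    unfolding s_def by (rule field_aux2[OF d0])
  also have "\<dots> = (poly (PP a b (Suc (Suc n))) z - t * poly (PP a b (Suc n)) z)
              / (poly (QQ a b (Suc (Suc n))) z - t * poly (QQ a b (Suc n)) z)"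
    by (simp add: d_def a'_def b'_def algebra_simps)
  finally show ?case .
qed

lemma det_PQ_poly: "poly (PP a b (Suc n)) z * poly (QQ a b n) z - poly (PP a b n) z * poly (QQ a b (Suc n)) z
   = (\<Prod>k=1..Suc n. a k)"
  using arg_cong[OF det_PQ[of a b n], of "\<lambda>p. poly p z"] by simp



lemma ev_nz: "eventually (\<lambda>z::complex. z \<noteq> 0) at_infinity"
  using eventually_at_infinity[of "\<lambda>z::complex. z \<noteq> 0"] by (metis norm_zero zero_less_one not_le)

lemma ev_norm_ge: "eventually (\<lambda>z::complex. norm z \<ge> r) at_infinity"
  using eventually_at_infinity by blast

lemma poly_asymp:
  fixes p :: "complex poly"
  assumes "p \<noteq> 0"
  shows "(\<lambda>z. poly p z) \<sim>[at_infinity] (\<lambda>z. lead_coeff p * z ^ degree p)"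
proof -
  have t: "((\<lambda>z. poly (reflect_poly p) (inverse z)) \<longlongrightarrow> poly (reflect_poly p) 0) at_infinity"
    by (intro tendsto_poly tendsto_inverse_0)
  have "eventually (\<lambda>z. poly (reflect_poly p) (inverse z) = poly p z / z ^ degree p) at_infinity"
    using ev_nz
  proof eventually_elim
    case (elim z)
    have "poly (reflect_poly p) (inverse z) = inverse z ^ degree p * poly p z"
      using elim by (simp add: poly_reflect_poly_nz)
    thus ?case by (simp add: divide_inverse power_inverse mult.commute)
  qed
  with t have "((\<lambda>z. poly p z / z ^ degree p) \<longlongrightarrow> lead_coeff p) at_infinity"
    by (simp add: poly_0_coeff_0 tendsto_cong)
  thus ?thesis by (rule asymp_equivI'_const) (use assms in simp)
qed

lemma poly_ev_nz:
  fixes p :: "complex poly"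
  assumes "p \<noteq> 0"
  shows "eventually (\<lambda>z. poly p z \<noteq> 0) at_infinity"
  using asymp_equiv_eventually_zeros[OF poly_asymp[OF assms]] ev_nz
  by eventually_elim (use assms in simp)

lemma inv_pow_tendsto:
  "k \<ge> 1 \<Longrightarrow> ((\<lambda>z::complex. c / z ^ k) \<longlongrightarrow> 0) at_infinity"
proof -
  assume k: "k \<ge> 1"
  have "((\<lambda>z::complex. c * inverse z ^ k) \<longlongrightarrow> c * 0 ^ k) at_infinity"
    by (intro tendsto_intros tendsto_inverse_0)
  moreover have "(\<lambda>z::complex. c * inverse z ^ k) = (\<lambda>z. c / z ^ k)"
    by (simp add: divide_inverse power_inverse)
  moreover have "c * (0::complex) ^ k = 0" using k by simp
  ultimately show ?thesis by simp
qed

lemma div_aux0: "z \<noteq> (0::complex) \<Longrightarrow> c' \<noteq> 0 \<Longrightarrow> z ^ m = z ^ j * z ^ k \<Longrightarrow> (c / c') / z ^ j = (c / z ^ m) / (c' / z ^ k)"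
  by (simp add: divide_simps)

lemma smallo_pow:
  fixes c c' :: complex
  assumes "k < m" "c' \<noteq> 0"
  shows "(\<lambda>z. c / z ^ m) \<in> o[at_infinity](\<lambda>z. c' / z ^ k)"
proof (rule smalloI_tendsto)
  have "eventually (\<lambda>z. (c / c') / z ^ (m - k) = (c / z ^ m) / (c' / z ^ k)) at_infinity"
    using ev_nz
  proof eventually_elim
    case (elim z)
    have zz: "z ^ m = z ^ (m - k) * z ^ k" using assms(1) by (simp add: power_add[symmetric])
    show ?case using div_aux0[OF elim assms(2) zz] .
  qed
  moreover have "((\<lambda>z::complex. (c / c') / z ^ (m - k)) \<longlongrightarrow> 0) at_infinity"
    by (rule inv_pow_tendsto) (use assms in simp)
  ultimately show "((\<lambda>z. (c / z ^ m) / (c' / z ^ k)) \<longlongrightarrow> 0) at_infinity"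
    by (rule Lim_transform_eventually[rotated])
  show "eventually (\<lambda>z. c' / z ^ k \<noteq> 0) at_infinity"
    using ev_nz by eventually_elim (use assms in simp)
qed

lemma bigo_pow:
  fixes c :: complex
  assumes "k \<le> m"
  shows "(\<lambda>z. c / z ^ m) \<in> O[at_infinity](\<lambda>z. 1 / z ^ k)"
proof (rule bigoI[of _ "norm c"])
  show "eventually (\<lambda>z. norm (c / z ^ m) \<le> norm c * norm (1 / z ^ k)) at_infinity"
    using ev_norm_ge[of 1]
  proof eventually_elim
    case (elim z)
    have "norm z ^ k \<le> norm z ^ m" using elim assms by (intro power_increasing) auto
    moreover have "norm z ^ k > 0" using elim by (intro zero_less_power) linarith
    ultimately have "norm c / norm z ^ m \<le> norm c / norm z ^ k"
      by (intro divide_left_mono) auto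
    thus ?case by (simp add: norm_divide norm_power)
  qed
qed

lemma div_aux: "z \<noteq> (0::complex) \<Longrightarrow> lR \<noteq> 0 \<Longrightarrow> lS \<noteq> 0 \<Longrightarrow> z ^ k * z ^ dR = z ^ j * z ^ dS \<Longrightarrow> 
   (lS / lR) / z ^ j = (1 / z ^ k) / ((lR * z ^ dR) / (lS * z ^ dS))"
  by (simp add: divide_simps)

lemma rat_smallo:
  fixes R S :: "complex poly"
  assumes "R \<noteq> 0" "S \<noteq> 0" "degree S < k + degree R"
  shows "(\<lambda>z. 1 / z ^ k) \<in> o[at_infinity](\<lambda>z. poly R z / poly S z)"
proof -
  have eq: "(\<lambda>z. poly R z / poly S z) \<sim>[at_infinity]
      (\<lambda>z. (lead_coeff R * z ^ degree R) / (lead_coeff S * z ^ degree S))"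
    by (intro asymp_equiv_divide poly_asymp assms)
  have "(\<lambda>z. 1 / z ^ k) \<in> o[at_infinity](\<lambda>z. (lead_coeff R * z ^ degree R) / (lead_coeff S * z ^ degree S))"
  proof (rule smalloI_tendsto)
    have "eventually (\<lambda>z. (lead_coeff S / lead_coeff R) / z ^ (k + degree R - degree S) =
        (1 / z ^ k) / ((lead_coeff R * z ^ degree R) / (lead_coeff S * z ^ degree S))) at_infinity"
      using ev_nz
    proof eventually_elim
      case (elim z)
      have "z ^ (k + degree R) = z ^ (k + degree R - degree S) * z ^ degree S"
        using assms(3) by (simp add: power_add[symmetric])
      hence zz: "z ^ k * z ^ degree R = z ^ (k + degree R - degree S) * z ^ degree S"
        by (simp add: power_add)
      show ?case using div_aux[OF elim _ _ zz] assms(1,2) by simp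
    qed
    moreover have "((\<lambda>z::complex. (lead_coeff S / lead_coeff R) / z ^ (k + degree R - degree S)) \<longlongrightarrow> 0) at_infinity"
      by (rule inv_pow_tendsto) (use assms in simp)
    ultimately show "((\<lambda>z. (1 / z ^ k) / ((lead_coeff R * z ^ degree R) / (lead_coeff S * z ^ degree S))) \<longlongrightarrow> 0) at_infinity"
      by (rule Lim_transform_eventually[rotated])
    show "eventually (\<lambda>z. (lead_coeff R * z ^ degree R) / (lead_coeff S * z ^ degree S) \<noteq> 0) at_infinity"
      using ev_nz by eventually_elim (use assms in simp)
  qed
  thus ?thesis
    by (rule landau_o.small.bigtheta_trans1[OF _ asymp_equiv_imp_bigtheta[OF asymp_equiv_symI[OF eq]]])
qed

lemma asymp_equiv_filter_mono: "F \<le> G \<Longrightarrow> f \<sim>[G] g \<Longrightarrow> f \<sim>[F] g"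
  unfolding asymp_equiv_def by (rule tendsto_mono)

lemma at_inf_within_le: "at_inf_within X \<le> at_infinity"
  by (simp add: at_inf_within_def)

lemma at_inf_within_nbot:
  assumes "\<not> bounded X"
  shows "at_inf_within X \<noteq> bot"
proof
  assume "at_inf_within X = bot"
  hence "eventually (\<lambda>_. False) (at_inf_within X)" by simp
  then obtain r where r: "\<And>x. norm x \<ge> r \<Longrightarrow> x \<in> X \<Longrightarrow> False"
    unfolding at_inf_within_def eventually_inf_principal eventually_at_infinity by blast
  have "X \<subseteq> cball 0 r"
    using r by (force simp: dist_norm)
  hence "bounded X" using bounded_cball bounded_subset by blast
  thus False using assms by simp
qed



context
  fixes a b :: "nat \<Rightarrow> complex"
  assumes a_nz: "\<And>n. n \<ge> 1 \<Longrightarrow> a n \<noteq> 0"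
begin

abbreviation "ww n \<equiv> rf_eval (approximant a b n)"
abbreviation "cc n \<equiv> (\<Prod>k=1..Suc n. a k)"

lemma ww_eq: "ww n z = poly (PP a b n) z / poly (QQ a b n) z"
  by (rule rf_eval_approx[OF a_nz])

lemma cc_nz: "cc n \<noteq> 0"
  using a_nz by (simp add: prod_zero_iff)

lemma QQ_asymp: "(\<lambda>z. poly (QQ a b n) z) \<sim>[at_infinity] (\<lambda>z. z ^ n)"
  using poly_asymp[OF QQ_nz[of a b n]] QQ_deg_coeff[of a b n] unfolding QQ_degree by simp

lemma QQ_ev_nz: "eventually (\<lambda>z. poly (QQ a b n) z \<noteq> 0) at_infinity"
  by (rule poly_ev_nz[OF QQ_nz])

lemma diff_asymp:
  "(\<lambda>z. ww (Suc n) z - ww n z) \<sim>[at_infinity] (\<lambda>z. cc n / z ^ (2*n+1))"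
proof -
  have "(\<lambda>z. cc n / (poly (QQ a b (Suc n)) z * poly (QQ a b n) z)) \<sim>[at_infinity]
        (\<lambda>z. cc n / (z ^ Suc n * z ^ n))"
    by (intro asymp_equiv_divide asymp_equiv_mult QQ_asymp asymp_equiv_refl)
  moreover have "eventually (\<lambda>z. cc n / (poly (QQ a b (Suc n)) z * poly (QQ a b n) z)
        = ww (Suc n) z - ww n z) at_infinity"
    using QQ_ev_nz[of "Suc n"] QQ_ev_nz[of n]
  proof eventually_elim
    case (elim z)
    have "ww (Suc n) z - ww n z = (poly (PP a b (Suc n)) z * poly (QQ a b n) z - poly (PP a b n) z * poly (QQ a b (Suc n)) z)
         / (poly (QQ a b (Suc n)) z * poly (QQ a b n) z)"
      unfolding ww_eq using elim by (simp add: diff_frac_eq)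
    thus ?case by (simp only: det_PQ_poly)
  qed
  moreover have "eventually (\<lambda>z. cc n / (z ^ Suc n * z ^ n) = cc n / z ^ (2*n+1)) at_infinity"
    by (intro always_eventually allI) (simp add: power_add[symmetric] mult_2)
  ultimately show ?thesis by (rule asymp_equiv_transfer)
qed

lemma w_asymp:
  assumes "n \<ge> 1"
  shows "ww n \<sim>[at_infinity] (\<lambda>z. a 1 / z)"
proof -
  have a1: "a 1 \<noteq> 0" using a_nz by simp
  have P0: "PP a b n \<noteq> 0" using PP_lead[of n a b, OF assms a1] a1 by auto
  have "(\<lambda>z. poly (PP a b n) z / poly (QQ a b n) z) \<sim>[at_infinity]
        (\<lambda>z. (a 1 * z ^ (n - 1)) / z ^ n)"
    using poly_asymp[OF P0] PP_lead[of n a b, OF assms a1] PP_degree[of n a b, OF assms a1]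
    by (intro asymp_equiv_divide QQ_asymp) simp_all
  moreover have "eventually (\<lambda>z. poly (PP a b n) z / poly (QQ a b n) z = ww n z) at_infinity"
    by (simp add: ww_eq)
  moreover have "eventually (\<lambda>z. (a 1 * z ^ (n - 1)) / z ^ n = a 1 / z) at_infinity"
    using ev_nz
  proof eventually_elim
    case (elim z)
    have "z ^ n = z ^ (n - 1) * z" using assms by (cases n) auto
    thus ?case using elim by simp
  qed
  ultimately show ?thesis by (rule asymp_equiv_transfer)
qed

lemma asymptotic_seq_inf:
  "(\<lambda>z. ww (Suc (Suc n)) z - ww (Suc n) z) \<in> o[G](\<lambda>z. ww (Suc n) z - ww n z)"
  if "G \<le> at_infinity"
proof -
  have "(\<lambda>z. ww (Suc (Suc n)) z - ww (Suc n) z) \<in> O[G](\<lambda>z. cc (Suc n) / z ^ (2*Suc n+1))"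
    by (intro asymp_equiv_imp_bigo asymp_equiv_filter_mono[OF that] diff_asymp)
  also have "(\<lambda>z. cc (Suc n) / z ^ (2*Suc n+1)) \<in> o[G](\<lambda>z. cc n / z ^ (2*n+1))"
    by (intro landau_o.small.filter_mono[OF that] smallo_pow cc_nz) simp
  also have "(\<lambda>z. cc n / z ^ (2*n+1)) \<in> O[G](\<lambda>z. ww (Suc n) z - ww n z)"
    by (intro asymp_equiv_imp_bigo asymp_equiv_filter_mono[OF that] asymp_equiv_symI[OF diff_asymp])
  finally show ?thesis .
qed

end


context
  fixes a b :: "nat \<Rightarrow> complex"
  assumes a_nz: "\<And>n. n \<ge> 1 \<Longrightarrow> a n \<noteq> 0"
  fixes F :: "complex filter" and f :: "complex \<Rightarrow> complex"
  assumes FL: "F \<le> at_infinity"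
begin

abbreviation "wv n \<equiv> rf_eval (approximant a b n)"
abbreviation "cv n \<equiv> (\<Prod>k=1..Suc n. a k)"

lemma diffF: "(\<lambda>z. wv (Suc n) z - wv n z) \<sim>[F] (\<lambda>z. cv n / z ^ (2*n+1))"
  by (rule asymp_equiv_filter_mono[OF FL diff_asymp[OF a_nz]])

lemma diff_bigo: "(\<lambda>z. wv (Suc n) z - wv n z) \<in> O[F](\<lambda>z. 1 / z ^ (2*n+1))"
proof -
  have "(\<lambda>z. wv (Suc n) z - wv n z) \<in> O[F](\<lambda>z. cv n / z ^ (2*n+1))"
    by (rule asymp_equiv_imp_bigo[OF diffF])
  also have "(\<lambda>z. cv n / z ^ (2*n+1)) \<in> O[F](\<lambda>z. 1 / z ^ (2*n+1))"
    by (rule landau_o.big.filter_mono[OF FL bigo_pow]) simp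
  finally show ?thesis .
qed

lemma O_to_C:
  assumes "\<forall>n. (\<lambda>z. f z - wv n z) \<in> O[F](\<lambda>z. 1 / z ^ (2*n+1))"
  shows "(\<lambda>z. f z - wv n z) \<sim>[F] (\<lambda>z. cv n / z ^ (2*n+1))"
proof -
  have "(\<lambda>z. f z - wv (Suc n) z) \<in> O[F](\<lambda>z. 1 / z ^ (2*Suc n+1))" using assms by blast
  also have "(\<lambda>z. 1 / z ^ (2*Suc n+1)) \<in> o[F](\<lambda>z. cv n / z ^ (2*n+1))"
    by (rule landau_o.small.filter_mono[OF FL smallo_pow]) (use cc_nz[OF a_nz] in simp_all)
  finally have h: "(\<lambda>z. f z - wv (Suc n) z) \<in> o[F](\<lambda>z. cv n / z ^ (2*n+1))" .
  have "(\<lambda>z. (f z - wv (Suc n) z) + (wv (Suc n) z - wv n z)) \<sim>[F] (\<lambda>z. cv n / z ^ (2*n+1))"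
    by (subst asymp_equiv_add_left[OF h]) (rule diffF)
  thus ?thesis by simp
qed

lemma C_to_O:
  assumes "(\<lambda>z. f z - wv n z) \<sim>[F] (\<lambda>z. cv n / z ^ (2*n+1))"
  shows "(\<lambda>z. f z - wv n z) \<in> O[F](\<lambda>z. 1 / z ^ (2*n+1))"
proof -
  have "(\<lambda>z. f z - wv n z) \<in> O[F](\<lambda>z. cv n / z ^ (2*n+1))"
    by (rule asymp_equiv_imp_bigo[OF assms])
  also have "(\<lambda>z. cv n / z ^ (2*n+1)) \<in> O[F](\<lambda>z. 1 / z ^ (2*n+1))"
    by (rule landau_o.big.filter_mono[OF FL bigo_pow]) simp
  finally show ?thesis .
qed

lemma C_to_A:
  assumes "\<forall>n. (\<lambda>z. f z - wv n z) \<sim>[F] (\<lambda>z. cv n / z ^ (2*n+1))"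
  shows "acf_expansion F f a b"
  unfolding acf_expansion_def asymptotic_sequence_def
proof (intro conjI allI)
  fix n
  show "(\<lambda>z. wv (Suc (Suc n)) z - wv (Suc n) z) \<in> o[F](\<lambda>z. wv (Suc n) z - wv n z)"
    by (rule asymptotic_seq_inf[OF a_nz FL])
  have "(\<lambda>z. f z - wv n z) \<sim>[F] (\<lambda>z. wv (Suc n) z - wv n z)"
    using assms asymp_equiv_symI[OF diffF] by (blast intro: asymp_equiv_trans)
  thus "(\<lambda>z. f z - wv n z) \<in> O[F](\<lambda>z. wv (Suc n) z - wv n z)"
    by (rule asymp_equiv_imp_bigo)
qed

lemma A_to_O:
  assumes "acf_expansion F f a b"
  shows "(\<lambda>z. f z - wv n z) \<in> O[F](\<lambda>z. 1 / z ^ (2*n+1))"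
proof -
  have "(\<lambda>z. f z - wv n z) \<in> O[F](\<lambda>z. wv (Suc n) z - wv n z)"
    using assms unfolding acf_expansion_def by blast
  also have "(\<lambda>z. wv (Suc n) z - wv n z) \<in> O[F](\<lambda>z. 1 / z ^ (2*n+1))"
    by (rule diff_bigo)
  finally show ?thesis .
qed

lemma step_down:
  assumes "(\<lambda>z. f z - wv (Suc n) z) \<in> O[F](\<lambda>z. 1 / z ^ (2*Suc n+1))"
  shows "(\<lambda>z. f z - wv n z) \<in> O[F](\<lambda>z. 1 / z ^ (2*n+1))"
proof -
  have "(\<lambda>z. f z - wv (Suc n) z) \<in> O[F](\<lambda>z. 1 / z ^ (2*n+1))"
    using assms landau_o.big.filter_mono[OF FL bigo_pow[of "2*n+1" "2*Suc n+1" 1]]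
    by (auto intro: landau_o.big_trans)
  hence "(\<lambda>z. (f z - wv (Suc n) z) + (wv (Suc n) z - wv n z)) \<in> O[F](\<lambda>z. 1 / z ^ (2*n+1))"
    by (rule sum_in_bigo(1)[OF _ diff_bigo])
  thus ?thesis by simp
qed

lemma E_to_O:
  assumes "infinite {n. (\<lambda>z. f z - wv n z) \<in> O[F](\<lambda>z. 1 / z ^ (2*n+1))}"
  shows "(\<lambda>z. f z - wv n z) \<in> O[F](\<lambda>z. 1 / z ^ (2*n+1))"
proof -
  have down: "(\<lambda>z. f z - wv (m + d) z) \<in> O[F](\<lambda>z. 1 / z ^ (2*(m+d)+1)) \<Longrightarrow>
      (\<lambda>z. f z - wv m z) \<in> O[F](\<lambda>z. 1 / z ^ (2*m+1))" for m d
  proof (induction d arbitrary: m)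
    case 0 thus ?case by simp
  next
    case (Suc d)
    have "(\<lambda>z. f z - wv (Suc m) z) \<in> O[F](\<lambda>z. 1 / z ^ (2*Suc m+1))"
      by (rule Suc.IH) (use Suc.prems in simp)
    thus ?case by (rule step_down)
  qed
  from assms obtain N where "N \<ge> n" "(\<lambda>z. f z - wv N z) \<in> O[F](\<lambda>z. 1 / z ^ (2*N+1))"
    unfolding infinite_nat_iff_unbounded_le by blast
  thus ?thesis using down[of n "N - n"] by simp
qed

lemma rat_unique:
  fixes p q P Q :: "complex poly"
  assumes nb: "F \<noteq> bot" and q: "q \<noteq> 0" and Q: "Q \<noteq> 0" and dg: "degree (q * Q) < k"
    and big: "(\<lambda>z. poly p z / poly q z - poly P z / poly Q z) \<in> O[F](\<lambda>z. 1 / z ^ k)"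
  shows "p * Q = P * q"
proof (rule ccontr)
  assume ne: "p * Q \<noteq> P * q"
  define R where "R = p * Q - P * q"
  define S where "S = q * Q"
  have R0: "R \<noteq> 0" using ne unfolding R_def by simp
  have S0: "S \<noteq> 0" using q Q unfolding S_def by simp
  have evI: "eventually (\<lambda>z. poly q z \<noteq> 0 \<and> poly Q z \<noteq> 0 \<and> poly R z \<noteq> 0) at_infinity"
    using poly_ev_nz[OF q] poly_ev_nz[OF Q] poly_ev_nz[OF R0] by eventually_elim simp
  hence ev: "eventually (\<lambda>z. poly q z \<noteq> 0 \<and> poly Q z \<noteq> 0 \<and> poly R z \<noteq> 0) F"
    using FL filter_leD by blast
  have evq: "eventually (\<lambda>z. poly p z / poly q z - poly P z / poly Q z = poly R z / poly S z) F"
    using ev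
  proof eventually_elim
    case (elim z)
    have "poly p z / poly q z - poly P z / poly Q z = (poly p z * poly Q z - poly P z * poly q z) / (poly q z * poly Q z)"
      using elim by (intro diff_frac_eq) auto
    also have "\<dots> = poly R z / poly S z" by (simp add: R_def S_def)
    finally show ?case .
  qed
  have "(\<lambda>z. poly R z / poly S z) \<in> O[F](\<lambda>z. 1 / z ^ k)"
    using landau_o.big.in_cong[OF evq] big by blast
  also have "(\<lambda>z. 1 / z ^ k) \<in> o[F](\<lambda>z. poly R z / poly S z)"
    by (rule landau_o.small.filter_mono[OF FL rat_smallo[OF R0 S0]]) (use dg in \<open>simp add: S_def\<close>)
  finally have "eventually (\<lambda>z. poly R z / poly S z = 0) F"
    by (simp add: landau_o.small_refl_iff)
  with ev have "eventually (\<lambda>z. False) F"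
    by eventually_elim (use S0 in \<open>auto simp: S_def\<close>)
  thus False using nb by simp
qed

end


lemma alg1:
  fixes pn pm qn qm f pi :: complex
  assumes "pm - f * qm \<noteq> 0" "pi \<noteq> 0" "pn * qm - pm * qn = pi"
  shows "(pn - ((pn - f * qn) / (pm - f * qm)) * pm) / (qn - ((pn - f * qn) / (pm - f * qm)) * qm) = f"
proof -
  define Dm where "Dm = pm - f * qm"
  have Dm: "Dm \<noteq> 0" using assms(1) by (simp add: Dm_def)
  have 1: "pn - ((pn - f * qn) / Dm) * pm = (- f * pi) / Dm"
    using Dm assms(3) unfolding Dm_def by (simp add: divide_simps) (simp add: algebra_simps flip: assms(3))
  have 2: "qn - ((pn - f * qn) / Dm) * qm = (- pi) / Dm"
    using Dm assms(3) unfolding Dm_def by (simp add: divide_simps) (simp add: algebra_simps flip: assms(3))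
  show ?thesis unfolding Dm_def[symmetric] 1 2 using Dm assms(2) by simp
qed

lemma alg2:
  fixes z t c0 c1 :: complex
  assumes "z \<noteq> 0" "t \<noteq> 0" "c0 \<noteq> 0"
  shows "(z * t) * (c1 / (z^3 * t^2)) / (t * (c0 / (z * t^2))) = (c1 / c0) / z"
  using assms by (simp add: divide_simps power2_eq_square power3_eq_cube)

lemma alg3:
  fixes g pn pm qn qm pi :: complex
  assumes "qn \<noteq> 0" "qn - g * qm \<noteq> 0" "pn * qm - pm * qn = pi"
  shows "(pn - g * pm) / (qn - g * qm) - pn / qn = g * pi / (qn * (qn - g * qm))"
  using assms by (simp add: divide_simps) (simp add: algebra_simps flip: assms(3))

lemma alg4:
  fixes z t c pi :: complex
  assumes "z \<noteq> 0"
  shows "(c / z) * pi / (z * t * (z * t)) = (c * pi) / (z^3 * t^2)"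
  using assms by (simp add: divide_simps power2_eq_square power3_eq_cube)

lemma pow_aux: "(z::complex) ^ Suc m = z * z ^ m" "z ^ (2 * Suc m + 1) = z^3 * (z^m)^2"
  "z ^ (2 * m + 1) = z * (z^m)^2"
  by (simp_all add: power_add power_mult_distrib flip: power_mult) (simp_all add: algebra_simps power2_eq_square power3_eq_cube power_add)

context
  fixes a b :: "nat \<Rightarrow> complex"
  assumes a_nz: "\<And>n. n \<ge> 1 \<Longrightarrow> a n \<noteq> 0"
  fixes F :: "complex filter" and f :: "complex \<Rightarrow> complex"
  assumes FL: "F \<le> at_infinity" and NB: "F \<noteq> bot"
begin

abbreviation "wx n \<equiv> rf_eval (approximant a b n)"
abbreviation "cx n \<equiv> (\<Prod>k=1..Suc n. a k)"

lemma evF: "eventually P at_infinity \<Longrightarrow> eventually P F"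
  using FL filter_leD by blast

lemma D_to_G:
  assumes DD: "\<forall>n. (\<lambda>z. f z - wx n z) \<in> O[F](\<lambda>z. 1 / z ^ (2*n+1))"
  shows "{v. rf_degree v \<le> n \<and> (\<lambda>z. f z - rf_eval v z) \<in> O[F](\<lambda>z. 1 / z ^ (2*n+1))}
         = {approximant a b n}"
proof (intro equalityI subsetI)
  fix v assume "v \<in> {v. rf_degree v \<le> n \<and> (\<lambda>z. f z - rf_eval v z) \<in> O[F](\<lambda>z. 1 / z ^ (2*n+1))}"
  hence dv: "rf_degree v \<le> n" and bv: "(\<lambda>z. f z - rf_eval v z) \<in> O[F](\<lambda>z. 1 / z ^ (2*n+1))" by auto
  define p where "p = fst (quot_of_fract v)"
  define q where "q = snd (quot_of_fract v)"
  have q0: "q \<noteq> 0" unfolding q_def by simp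
  have dp: "degree p \<le> n" "degree q \<le> n" using dv unfolding rf_degree_gen p_def q_def by auto
  have bd: "(\<lambda>z. (f z - wx n z) - (f z - rf_eval v z)) \<in> O[F](\<lambda>z. 1 / z ^ (2*n+1))"
    using sum_in_bigo(2)[OF spec[OF DD, of n] bv] .
  have big: "(\<lambda>z. poly p z / poly q z - poly (PP a b n) z / poly (QQ a b n) z) \<in> O[F](\<lambda>z. 1 / z ^ (2*n+1))"
  proof -
    have eqv: "\<And>z. rf_eval v z = poly p z / poly q z" by (simp add: rf_eval_gen p_def q_def)
    show ?thesis using bd by (simp add: eqv rf_eval_approx[OF a_nz])
  qed
  have "degree (q * QQ a b n) \<le> degree q + degree (QQ a b n)" by (rule degree_mult_le)
  hence "degree (q * QQ a b n) < 2*n+1" using dp QQ_degree[of a b n] by simp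
  hence "p * QQ a b n = PP a b n * q"
    by (intro rat_unique[OF a_nz FL NB q0 QQ_nz _ big])
  hence "Fract p q = Fract (PP a b n) (QQ a b n)"
    using q0 QQ_nz[of a b n] by (simp add: eq_fract)
  moreover have "Fract p q = v" unfolding p_def q_def by simp
  ultimately show "v \<in> {approximant a b n}"
    by (simp add: approximant_eq Fract_conv_to_fract)
next
  fix v assume "v \<in> {approximant a b n}"
  thus "v \<in> {v. rf_degree v \<le> n \<and> (\<lambda>z. f z - rf_eval v z) \<in> O[F](\<lambda>z. 1 / z ^ (2*n+1))}"
    using DD rf_degree_approx[OF a_nz] by auto
qed

lemma D_to_H:
  assumes DD: "\<forall>n. (\<lambda>z. f z - wx n z) \<in> O[F](\<lambda>z. 1 / z ^ (2*n+1))" and n1: "n \<ge> 1"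
  shows "pade_candidates F f n = {approximant a b n}"
proof (intro equalityI subsetI)
  fix v assume "v \<in> pade_candidates F f n"
  then obtain g h where v: "v = to_fract g / to_fract h" and h0: "h \<noteq> 0"
    and dg: "degree g \<le> n - 1" "degree h \<le> n"
    and bv: "(\<lambda>z. f z - poly g z / poly h z) \<in> O[F](\<lambda>z. 1 / z ^ (2*n+1))"
    unfolding pade_candidates_def by blast
  have "(\<lambda>z. (f z - wx n z) - (f z - poly g z / poly h z)) \<in> O[F](\<lambda>z. 1 / z ^ (2*n+1))"
    using sum_in_bigo(2)[OF spec[OF DD, of n] bv] .
  hence big: "(\<lambda>z. poly g z / poly h z - poly (PP a b n) z / poly (QQ a b n) z) \<in> O[F](\<lambda>z. 1 / z ^ (2*n+1))"
    by (simp add: rf_eval_approx[OF a_nz])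
  have "degree (h * QQ a b n) \<le> degree h + degree (QQ a b n)" by (rule degree_mult_le)
  hence "degree (h * QQ a b n) < 2*n+1" using dg QQ_degree[of a b n] by simp
  hence "g * QQ a b n = PP a b n * h"
    by (intro rat_unique[OF a_nz FL NB h0 QQ_nz _ big])
  hence "Fract g h = Fract (PP a b n) (QQ a b n)"
    using h0 QQ_nz[of a b n] by (simp add: eq_fract)
  thus "v \<in> {approximant a b n}"
    by (simp add: v approximant_eq Fract_conv_to_fract)
next
  fix v assume "v \<in> {approximant a b n}"
  hence v: "v = to_fract (PP a b n) / to_fract (QQ a b n)" by (simp add: approximant_eq)
  have bb: "(\<lambda>z. f z - poly (PP a b n) z / poly (QQ a b n) z) \<in> O[F](\<lambda>z. 1 / z ^ (2*n+1))"
    using DD by (simp add: rf_eval_approx[OF a_nz])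
  show "v \<in> pade_candidates F f n"
    unfolding pade_candidates_def
    by (rule CollectI, rule exI[of _ "PP a b n"], rule exI[of _ "QQ a b n"])
       (use bb v QQ_nz[of a b n] PP_degree_le[of a b n] QQ_degree[of a b n] in auto)
qed

lemma H_to_E:
  assumes HH: "\<forall>n\<ge>1. pade_candidates F f n = {approximant a b n}"
  shows "infinite {n. (\<lambda>z. f z - wx n z) \<in> O[F](\<lambda>z. 1 / z ^ (2*n+1))}"
proof -
  have hn: "(\<lambda>z. f z - wx n z) \<in> O[F](\<lambda>z. 1 / z ^ (2*n+1))" if n1: "n \<ge> 1" for n
  proof -
    have "approximant a b n \<in> pade_candidates F f n" using HH n1 by auto
    then obtain g h where v: "approximant a b n = to_fract g / to_fract h" and h0: "h \<noteq> 0"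
      and bv: "(\<lambda>z. f z - poly g z / poly h z) \<in> O[F](\<lambda>z. 1 / z ^ (2*n+1))"
      unfolding pade_candidates_def by blast
    have "Fract g h = Fract (PP a b n) (QQ a b n)"
      using v by (simp add: approximant_eq Fract_conv_to_fract)
    hence gh: "g * QQ a b n = PP a b n * h"
      using h0 QQ_nz[of a b n] by (simp add: eq_fract)
    have "eventually (\<lambda>z. poly h z \<noteq> 0 \<and> poly (QQ a b n) z \<noteq> 0) F"
      by (intro evF eventually_conj poly_ev_nz h0 QQ_nz)
    hence evq: "eventually (\<lambda>z. f z - poly g z / poly h z = f z - wx n z) F"
    proof eventually_elim
      case (elim z)
      have "poly g z * poly (QQ a b n) z = poly (PP a b n) z * poly h z"
        using arg_cong[OF gh, of "\<lambda>p. poly p z"] by simp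
      hence "poly g z / poly h z = poly (PP a b n) z / poly (QQ a b n) z"
        using frac_eq_eq[of "poly h z" "poly (QQ a b n) z" "poly g z" "poly (PP a b n) z"] elim by simp
      thus ?case by (simp add: rf_eval_approx[OF a_nz])
    qed
    show ?thesis using landau_o.big.in_cong[OF evq] bv by blast
  qed
  have *: "Suc m \<in> {n. (\<lambda>z. f z - wx n z) \<in> O[F](\<lambda>z. 1 / z ^ (2*n+1))}" for m
    using hn[of "Suc m"] by simp
  show ?thesis unfolding infinite_nat_iff_unbounded_le
  proof (intro allI)
    fix m show "\<exists>n\<ge>m. n \<in> {n. (\<lambda>z. f z - wx n z) \<in> O[F](\<lambda>z. 1 / z ^ (2*n+1))}"
      using *[of m] by (intro exI[of _ "Suc m"]) simp
  qed
qed

end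


lemma alg5: "(qn::complex) \<noteq> 0 \<Longrightarrow> pn - f * qn = - (qn * (f - pn / qn))"
  by (simp add: right_diff_distrib mult.commute)

lemma sum_bound_ev:
  fixes a b :: "nat \<Rightarrow> complex"
  shows "eventually (\<lambda>z::complex. \<forall>k\<in>{1..Suc m}. norm z \<ge> norm (a k) + norm (b k) + 2) at_infinity"
  using ev_norm_ge[of "\<Sum>k=1..Suc m. (norm (a k) + norm (b k) + 2)"]
proof eventually_elim
  case (elim z)
  show ?case
  proof
    fix k assume k: "k \<in> {1..Suc m}"
    have "norm (a k) + norm (b k) + 2 \<le> (\<Sum>k=1..Suc m. (norm (a k) + norm (b k) + 2))"
      by (rule member_le_sum[OF k]) auto
    thus "norm z \<ge> norm (a k) + norm (b k) + 2" using elim by linarith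
  qed
qed

context
  fixes a b :: "nat \<Rightarrow> complex"
  assumes a_nz: "\<And>n. n \<ge> 1 \<Longrightarrow> a n \<noteq> 0"
  fixes F :: "complex filter" and f :: "complex \<Rightarrow> complex"
  assumes FL: "F \<le> at_infinity" and NB: "F \<noteq> bot"
begin

abbreviation "wy n \<equiv> rf_eval (approximant a b n)"
abbreviation "cy n \<equiv> (\<Prod>k=1..Suc n. a k)"

lemma evF': "eventually P at_infinity \<Longrightarrow> eventually P F"
  using FL filter_leD by blast

lemma QQ_asympF: "(\<lambda>z. poly (QQ a b n) z) \<sim>[F] (\<lambda>z. z ^ n)"
  by (rule asymp_equiv_filter_mono[OF FL QQ_asymp[OF a_nz]])

lemma cy_succ: "cy (Suc m) = a (Suc (Suc m)) * cy m"
  by (simp add: prod.nat_ivl_Suc')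

lemma inv_tendstoF: "((\<lambda>z. c / z) \<longlongrightarrow> 0) F"
  using tendsto_mono[OF FL inv_pow_tendsto[of 1 c]] by simp

lemma ratio_tendsto: "((\<lambda>z. poly (QQ a b m) z / poly (QQ a b (Suc m)) z) \<longlongrightarrow> 0) F"
proof -
  have A: "(\<lambda>z. poly (QQ a b m) z / poly (QQ a b (Suc m)) z) \<sim>[F] (\<lambda>z. z ^ m / z ^ Suc m)"
    by (intro asymp_equiv_divide QQ_asympF)
  have e2: "eventually (\<lambda>z. z ^ m / z ^ Suc m = 1 / z) F"
    by (rule evF'[OF eventually_mono[OF ev_nz]]) simp
  have "(\<lambda>z. poly (QQ a b m) z / poly (QQ a b (Suc m)) z) \<sim>[F] (\<lambda>z. 1 / z)"
    by (rule asymp_equiv_trans[OF A asymp_equiv_refl_ev[OF e2]])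
  thus ?thesis by (rule asymp_equiv_tendsto_transfer[OF asymp_equiv_symI inv_tendstoF])
qed

lemma best:
  assumes DD: "\<forall>n. (\<lambda>z. f z - wy n z) \<in> O[F](\<lambda>z. 1 / z ^ (2*n+1))"
  shows "{v. best_rat_approx F f v} = range (approximant a b)"
proof (intro equalityI subsetI)
  fix v assume "v \<in> {v. best_rat_approx F f v}"
  hence bv: "best_rat_approx F f v" by simp
  define m where "m = rf_degree v"
  have key: "approximant a b m = v"
  proof (rule ccontr)
    assume ne: "approximant a b m \<noteq> v"
    define p where "p = fst (quot_of_fract v)"
    define q where "q = snd (quot_of_fract v)"
    define R where "R = PP a b m * q - p * QQ a b m"
    define S where "S = QQ a b m * q"
    have q0: "q \<noteq> 0" unfolding q_def by simp
    have vpq: "v = Fract p q" unfolding p_def q_def by simp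
    have R0: "R \<noteq> 0"
    proof
      assume "R = 0"
      hence "p * QQ a b m = PP a b m * q" unfolding R_def by simp
      hence "Fract p q = Fract (PP a b m) (QQ a b m)"
        using q0 QQ_nz[of a b m] by (simp add: eq_fract)
      thus False using ne vpq by (simp add: approximant_eq Fract_conv_to_fract)
    qed
    have S0: "S \<noteq> 0" unfolding S_def using q0 QQ_nz[of a b m] by simp
    have dq: "degree q \<le> m" using m_def unfolding rf_degree_gen q_def by simp
    have "degree S \<le> degree (QQ a b m) + degree q" unfolding S_def by (rule degree_mult_le)
    hence dS: "degree S < 2*m+1 + degree R" using dq QQ_degree[of a b m] by simp
    have evq: "eventually (\<lambda>z. wy m z - rf_eval v z = poly R z / poly S z) F"
      using evF'[OF poly_ev_nz[OF q0]] evF'[OF poly_ev_nz[OF QQ_nz[of a b m]]]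
    proof eventually_elim
      case (elim z)
      have "rf_eval v z = poly p z / poly q z" by (simp add: rf_eval_gen p_def q_def)
      hence "wy m z - rf_eval v z = poly (PP a b m) z / poly (QQ a b m) z - poly p z / poly q z"
        by (simp add: rf_eval_approx[OF a_nz])
      also have "\<dots> = (poly (PP a b m) z * poly q z - poly p z * poly (QQ a b m) z) / (poly (QQ a b m) z * poly q z)"
        using elim by (intro diff_frac_eq) auto
      also have "\<dots> = poly R z / poly S z" by (simp add: R_def S_def)
      finally show ?case .
    qed
    have "(\<lambda>z. f z - wy m z) \<in> O[F](\<lambda>z. 1 / z ^ (2*m+1))" using DD by blast
    also have "(\<lambda>z. 1 / z ^ (2*m+1)) \<in> o[F](\<lambda>z. poly R z / poly S z)"
      by (rule landau_o.small.filter_mono[OF FL rat_smallo[OF R0 S0 dS]])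
    finally have hs0: "(\<lambda>z. f z - wy m z) \<in> o[F](\<lambda>z. poly R z / poly S z)" .
    have hs: "(\<lambda>z. f z - wy m z) \<in> o[F](\<lambda>z. wy m z - rf_eval v z)"
      using hs0 landau_o.small.cong[OF evq] by simp
    have "(\<lambda>z. (f z - wy m z) + (wy m z - rf_eval v z)) \<sim>[F] (\<lambda>z. wy m z - rf_eval v z)"
      by (subst asymp_equiv_add_left[OF hs]) simp
    hence "(\<lambda>z. f z - rf_eval v z) \<sim>[F] (\<lambda>z. wy m z - rf_eval v z)" by simp
    hence "(\<lambda>z. wy m z - rf_eval v z) \<in> O[F](\<lambda>z. f z - rf_eval v z)"
      by (rule asymp_equiv_imp_bigo[OF asymp_equiv_symI])
    with hs have "(\<lambda>z. f z - wy m z) \<in> O[F](\<lambda>z. f z - rf_eval v z)"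
      by (rule landau_o.small_big_trans')
    moreover have "rf_degree (approximant a b m) \<le> rf_degree v"
      using rf_degree_approx[OF a_nz] m_def by simp
    ultimately have "approximant a b m = v"
      using bv unfolding best_rat_approx_def by blast
    with ne show False by simp
  qed
  show "v \<in> range (approximant a b)" using key by (metis rangeI)
next
  fix v assume "v \<in> range (approximant a b)"
  then obtain n where vn: "v = approximant a b n" by blast
  have "best_rat_approx F f (approximant a b n)"
    unfolding best_rat_approx_def
  proof (intro allI iffI)
    fix u assume "rf_degree u \<le> rf_degree (approximant a b n) \<and>
      (\<lambda>z. f z - rf_eval u z) \<in> O[F](\<lambda>z. f z - wy n z)"
    hence du: "rf_degree u \<le> n" and bu: "(\<lambda>z. f z - rf_eval u z) \<in> O[F](\<lambda>z. f z - wy n z)"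
      using rf_degree_approx[OF a_nz] by auto
    have "(\<lambda>z. f z - rf_eval u z) \<in> O[F](\<lambda>z. 1 / z ^ (2*n+1))"
      using bu DD by (blast intro: landau_o.big_trans)
    hence "u \<in> {v. rf_degree v \<le> n \<and> (\<lambda>z. f z - rf_eval v z) \<in> O[F](\<lambda>z. 1 / z ^ (2*n+1))}"
      using du by simp
    thus "u = approximant a b n" using D_to_G[OF a_nz FL NB DD] by blast
  next
    fix u assume "u = approximant a b n"
    thus "rf_degree u \<le> rf_degree (approximant a b n) \<and>
      (\<lambda>z. f z - rf_eval u z) \<in> O[F](\<lambda>z. f z - wy n z)" by simp
  qed
  thus "v \<in> {v. best_rat_approx F f v}" using vn by simp
qed

end


context
  fixes a b :: "nat \<Rightarrow> complex"
  assumes a_nz: "\<And>n. n \<ge> 1 \<Longrightarrow> a n \<noteq> 0"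
  fixes F :: "complex filter" and f :: "complex \<Rightarrow> complex"
  assumes FL: "F \<le> at_infinity" and NB: "F \<noteq> bot"
begin

abbreviation "wz n \<equiv> rf_eval (approximant a b n)"
abbreviation "cz n \<equiv> (\<Prod>k=1..Suc n. a k)"

lemma evH: "eventually P at_infinity \<Longrightarrow> eventually P F"
  using FL filter_leD by blast

lemma QQ_asympH: "(\<lambda>z. poly (QQ a b n) z) \<sim>[F] (\<lambda>z. z ^ n)"
  by (rule asymp_equiv_filter_mono[OF FL QQ_asymp[OF a_nz]])

lemma g_tendsto:
  fixes g :: "complex \<Rightarrow> complex"
  assumes "g \<sim>[F] (\<lambda>z. c / z)"
  shows "(g \<longlongrightarrow> 0) F"
proof -
  have "((\<lambda>z. c / z) \<longlongrightarrow> 0) F"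
    using tendsto_mono[OF FL inv_pow_tendsto[of 1 c]] by simp
  thus ?thesis by (rule asymp_equiv_tendsto_transfer[OF asymp_equiv_symI[OF assms]])
qed

lemma g_small:
  fixes g :: "complex \<Rightarrow> complex"
  assumes "(g \<longlongrightarrow> 0) F"
  shows "eventually (\<lambda>z. norm (g z) \<le> 1) F"
proof -
  have "((\<lambda>z. norm (g z)) \<longlongrightarrow> norm (0::complex)) F" by (rule tendsto_norm[OF assms])
  hence "eventually (\<lambda>z. norm (g z) < 1) F" by (rule order_tendstoD(2)) simp
  thus ?thesis by eventually_elim simp
qed

lemma cz_succ: "cz (Suc m) = a (Suc (Suc m)) * cz m"
  by (simp add: prod.nat_ivl_Suc')

lemma C_to_B:
  assumes CC: "\<forall>k. (\<lambda>z. f z - wz k z) \<sim>[F] (\<lambda>z. cz k / z ^ (2*k+1))" and n1: "n \<ge> 1"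
  shows "\<exists>g. g \<sim>[F] (\<lambda>z. a (n+1) / z) \<and> (\<forall>\<^sub>F z in F. f z = cf_fun a b n (g z) z)"
proof -
  obtain m where n: "n = Suc m" using n1 by (cases n) auto
  define pn where "pn = poly (PP a b (Suc m))"
  define pm where "pm = poly (PP a b m)"
  define qn where "qn = poly (QQ a b (Suc m))"
  define qm where "qm = poly (QQ a b m)"
  define g where "g = (\<lambda>z. (pn z - f z * qn z) / (pm z - f z * qm z))"
  have wzn: "wz (Suc m) z = pn z / qn z" for z by (simp add: rf_eval_approx[OF a_nz] pn_def qn_def)
  have wzm: "wz m z = pm z / qm z" for z by (simp add: rf_eval_approx[OF a_nz] pm_def qm_def)
  have czm: "cz m \<noteq> 0" "cz (Suc m) \<noteq> 0" using cc_nz[where a=a, OF a_nz] by auto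
  have CCm: "(\<lambda>z. f z - wz m z) \<sim>[F] (\<lambda>z. cz m / z ^ (2*m+1))" using CC by blast
  have CCn: "(\<lambda>z. f z - wz (Suc m) z) \<sim>[F] (\<lambda>z. cz (Suc m) / z ^ (2*Suc m+1))" using CC by blast
  have en0: "eventually (\<lambda>z. f z - wz m z \<noteq> 0) F"
    using asymp_equiv_eventually_zeros[OF CCm] evH[OF ev_nz]
    by eventually_elim (use czm in simp)
  have evs: "eventually (\<lambda>z. qn z \<noteq> 0 \<and> qm z \<noteq> 0 \<and> z \<noteq> 0 \<and> f z - wz m z \<noteq> 0) F"
    using evH[OF poly_ev_nz[OF QQ_nz[of a b "Suc m"]]] evH[OF poly_ev_nz[OF QQ_nz[of a b m]]] evH[OF ev_nz] en0
    unfolding qn_def qm_def by eventually_elim simp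
  have geq: "eventually (\<lambda>z. qn z * (f z - wz (Suc m) z) / (qm z * (f z - wz m z)) = g z) F"
    using evs
  proof eventually_elim
    case (elim z)
    have e1: "pn z - f z * qn z = - (qn z * (f z - pn z / qn z))" by (rule alg5) (use elim in auto)
    have e2: "pm z - f z * qm z = - (qm z * (f z - pm z / qm z))" by (rule alg5) (use elim in auto)
    have "g z = (- (qn z * (f z - pn z / qn z))) / (- (qm z * (f z - pm z / qm z)))"
      unfolding g_def e1 e2 ..
    thus ?case by (simp add: wzn wzm)
  qed
  have gA0: "(\<lambda>z. qn z * (f z - wz (Suc m) z) / (qm z * (f z - wz m z))) \<sim>[F]
      (\<lambda>z. z ^ Suc m * (cz (Suc m) / z ^ (2*Suc m+1)) / (z ^ m * (cz m / z ^ (2*m+1))))"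
    unfolding qn_def qm_def by (intro asymp_equiv_divide asymp_equiv_mult QQ_asympH CCm CCn)
  have rhs: "eventually (\<lambda>z. z ^ Suc m * (cz (Suc m) / z ^ (2*Suc m+1)) / (z ^ m * (cz m / z ^ (2*m+1)))
      = a (n+1) / z) F"
    using evH[OF ev_nz]
  proof eventually_elim
    case (elim z)
    have "z ^ Suc m * (cz (Suc m) / z ^ (2*Suc m+1)) / (z ^ m * (cz m / z ^ (2*m+1)))
        = (z * z^m) * (cz (Suc m) / (z^3 * (z^m)^2)) / (z^m * (cz m / (z * (z^m)^2)))"
      by (simp only: pow_aux(1)[of z m] pow_aux(2)[of z m] pow_aux(3)[of z m])
    also have "\<dots> = (cz (Suc m) / cz m) / z"
      by (rule alg2) (use elim czm in auto)
    also have "\<dots> = a (n+1) / z" using czm by (simp add: cz_succ n)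
    finally show ?case .
  qed
  have gA: "g \<sim>[F] (\<lambda>z. a (n+1) / z)"
    by (rule asymp_equiv_transfer[OF gA0 geq rhs])
  have gs: "eventually (\<lambda>z. norm (g z) \<le> 1) F" by (rule g_small[OF g_tendsto[OF gA]])
  have "eventually (\<lambda>z. f z = cf_fun a b n (g z) z) F"
    using evs gs evH[OF sum_bound_ev[of m a b]]
  proof eventually_elim
    case (elim z)
    have "cf_fun a b n (g z) z = (pn z - g z * pm z) / (qn z - g z * qm z)"
      unfolding n pn_def pm_def qn_def qm_def by (rule cf_fun_formula) (use elim in auto)
    also have "\<dots> = f z" unfolding g_def
    proof (rule alg1)
      have "pm z - f z * qm z = - (qm z * (f z - pm z / qm z))" by (rule alg5) (use elim in auto)
      thus "pm z - f z * qm z \<noteq> 0" using elim by (simp add: wzm)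
      show "cz m \<noteq> 0" by (rule czm)
      show "pn z * qm z - pm z * qn z = cz m"
        unfolding pn_def pm_def qn_def qm_def by (rule det_PQ_poly)
    qed
    finally show ?case by simp
  qed
  with gA show ?thesis by blast
qed

lemma B_to_C:
  assumes n1: "n \<ge> 1" and gA: "g \<sim>[F] (\<lambda>z. a (n+1) / z)"
    and ev: "\<forall>\<^sub>F z in F. f z = cf_fun a b n (g z) z"
  shows "(\<lambda>z. f z - wz n z) \<sim>[F] (\<lambda>z. cz n / z ^ (2*n+1))"
proof -
  obtain m where n: "n = Suc m" using n1 by (cases n) auto
  define pn where "pn = poly (PP a b (Suc m))"
  define pm where "pm = poly (PP a b m)"
  define qn where "qn = poly (QQ a b (Suc m))"
  define qm where "qm = poly (QQ a b m)"
  define D where "D = (\<lambda>z. qn z - g z * qm z)"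
  have wzn: "wz (Suc m) z = pn z / qn z" for z by (simp add: rf_eval_approx[OF a_nz] pn_def qn_def)
  have czm: "cz m \<noteq> 0" using cc_nz[where a=a, OF a_nz] by auto
  have g0: "(g \<longlongrightarrow> 0) F" by (rule g_tendsto[OF gA])
  have qn0: "eventually (\<lambda>z. qn z \<noteq> 0) F"
    unfolding qn_def by (rule evH[OF QQ_ev_nz[OF a_nz]])
  have Dq: "D \<sim>[F] qn"
  proof (rule asymp_equivI')
    have "((\<lambda>z. 1 - g z * (qm z / qn z)) \<longlongrightarrow> 1 - 0 * 0) F"
      unfolding qm_def qn_def by (intro tendsto_intros g0 ratio_tendsto[OF a_nz FL NB])
    moreover have "eventually (\<lambda>z. 1 - g z * (qm z / qn z) = D z / qn z) F"
      using qn0 by eventually_elim (simp add: D_def diff_divide_distrib)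
    ultimately show "((\<lambda>z. D z / qn z) \<longlongrightarrow> 1) F"
      by (simp add: tendsto_cong)
  qed
  have DZ: "D \<sim>[F] (\<lambda>z. z ^ Suc m)"
    using asymp_equiv_trans[OF Dq[unfolded qn_def] QQ_asympH[of "Suc m"]] .
  have D0: "eventually (\<lambda>z. D z \<noteq> 0) F"
    using asymp_equiv_eventually_zeros[OF Dq] qn0 by eventually_elim simp
  have eq: "eventually (\<lambda>z. g z * cz m / (qn z * D z) = f z - wz n z) F"
    using ev g_small[OF g0] evH[OF sum_bound_ev[of m a b]] qn0 D0
  proof eventually_elim
    case (elim z)
    have "f z = (pn z - g z * pm z) / (qn z - g z * qm z)"
      unfolding elim(1) n pn_def pm_def qn_def qm_def by (rule cf_fun_formula) (use elim in auto)
    hence "f z - wz n z = (pn z - g z * pm z) / (qn z - g z * qm z) - pn z / qn z"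
      by (simp add: n wzn)
    also have "\<dots> = g z * cz m / (qn z * (qn z - g z * qm z))"
    proof (rule alg3)
      show "qn z \<noteq> 0" "qn z - g z * qm z \<noteq> 0" using elim by (auto simp: D_def)
      show "pn z * qm z - pm z * qn z = cz m"
        unfolding pn_def pm_def qn_def qm_def by (rule det_PQ_poly)
    qed
    finally show ?case by (simp add: D_def)
  qed
  have gA': "g \<sim>[F] (\<lambda>z. a (Suc (Suc m)) / z)" using gA by (simp add: n)
  have asy: "(\<lambda>z. g z * cz m / (qn z * D z)) \<sim>[F]
      (\<lambda>z. (a (Suc (Suc m)) / z) * cz m / (z ^ Suc m * z ^ Suc m))"
    unfolding qn_def
    by (intro asymp_equiv_divide asymp_equiv_mult gA' asymp_equiv_refl QQ_asympH)
       (use DZ in \<open>simp add: qn_def\<close>)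
  have rhs: "eventually (\<lambda>z. (a (Suc (Suc m)) / z) * cz m / (z ^ Suc m * z ^ Suc m)
      = cz n / z ^ (2*n+1)) F"
    using evH[OF ev_nz]
  proof eventually_elim
    case (elim z)
    have p: "z ^ (2*n+1) = z^3 * (z^m)^2" unfolding n by (rule pow_aux(2))
    have c: "cz n = a (Suc (Suc m)) * cz m" unfolding n by (rule cz_succ)
    have "(a (Suc (Suc m)) / z) * cz m / (z ^ Suc m * z ^ Suc m)
        = (a (Suc (Suc m)) / z) * cz m / ((z * z^m) * (z * z^m))"
      by (simp only: pow_aux(1)[of z m] pow_aux(2)[of z m] pow_aux(3)[of z m])
    also have "\<dots> = (a (Suc (Suc m)) * cz m) / (z^3 * (z^m)^2)"
      by (rule alg4[OF elim])
    also have "\<dots> = cz n / z ^ (2*n+1)"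
      by (simp only: p c)
    finally show ?case .
  qed
  show ?thesis by (rule asymp_equiv_transfer[OF asy eq rhs])
qed

end


theorem theorem4p1:
  fixes a b :: "nat \<Rightarrow> complex"
  assumes a_nz: "\<And>n. n \<ge> 1 \<Longrightarrow> a n \<noteq> 0"
  defines "w \<equiv> approximant a b"
  shows
    \<comment> \<open>(1)\<close>
    "(\<forall>n. rf_degree (w n) = n)
   \<and> (\<forall>n\<ge>1. (rf_eval (w n)) \<sim>[at_infinity] (\<lambda>z. a 1 / z))
   \<and> (\<forall>n\<ge>1. (\<lambda>z. rf_eval (w n) z - rf_eval (w (n-1)) z)
               \<sim>[at_infinity] (\<lambda>z. (\<Prod>k=1..n. a k) / z ^ (2*n-1)))
   \<and> asymptotic_sequence at_infinity (\<lambda>n z. rf_eval (w (Suc n)) z - rf_eval (w n) z)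
   \<and>
    \<comment> \<open>(2) and (3)\<close>
    (\<forall>(X :: complex set) (f :: complex \<Rightarrow> complex). \<not> bounded X \<longrightarrow>
      (let F = at_inf_within X;
           A = acf_expansion F f a b;
           B = (\<forall>n\<ge>1. \<exists>g. (g \<sim>[F] (\<lambda>z. a (n+1) / z))
                        \<and> (\<forall>\<^sub>F z in F. f z = cf_fun a b n (g z) z));
           C = (\<forall>n. (\<lambda>z. f z - rf_eval (w n) z)
                       \<sim>[F] (\<lambda>z. (\<Prod>k=1..n+1. a k) / z ^ (2*n+1)));
           D = (\<forall>n. (\<lambda>z. f z - rf_eval (w n) z) \<in> O[F](\<lambda>z. 1 / z ^ (2*n+1)));
           E = (infinite {n. (\<lambda>z. f z - rf_eval (w n) z) \<in> O[F](\<lambda>z. 1 / z ^ (2*n+1))});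
           G = (\<forall>n. {v. rf_degree v \<le> n \<and>
                         (\<lambda>z. f z - rf_eval v z) \<in> O[F](\<lambda>z. 1 / z ^ (2*n+1))} = {w n});
           H = (\<forall>n\<ge>1. pade_candidates F f n = {w n})
       in (A \<longleftrightarrow> B) \<and> (A \<longleftrightarrow> C) \<and> (A \<longleftrightarrow> D) \<and> (A \<longleftrightarrow> E)
          \<and> (A \<longleftrightarrow> G) \<and> (A \<longleftrightarrow> H)
          \<and> (A \<longrightarrow> {v. best_rat_approx F f v} = range w)))"
proof -
  note a_nz' = a_nz
  have P1: "\<forall>n. rf_degree (w n) = n"
    unfolding w_def using rf_degree_approx[where a=a, OF a_nz] by blast
  have P2: "\<forall>n\<ge>1. (rf_eval (w n)) \<sim>[at_infinity] (\<lambda>z. a 1 / z)"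
    unfolding w_def using w_asymp[where a=a, OF a_nz] by blast
  have P3: "\<forall>n\<ge>1. (\<lambda>z. rf_eval (w n) z - rf_eval (w (n-1)) z)
               \<sim>[at_infinity] (\<lambda>z. (\<Prod>k=1..n. a k) / z ^ (2*n-1))"
  proof (intro allI impI)
    fix n :: nat assume "n \<ge> 1"
    then obtain m where n: "n = Suc m" by (cases n) auto
    show "(\<lambda>z. rf_eval (w n) z - rf_eval (w (n-1)) z)
               \<sim>[at_infinity] (\<lambda>z. (\<Prod>k=1..n. a k) / z ^ (2*n-1))"
      using diff_asymp[where a=a, OF a_nz, of b m] unfolding w_def n by simp
  qed
  have P4: "asymptotic_sequence at_infinity (\<lambda>n z. rf_eval (w (Suc n)) z - rf_eval (w n) z)"
    unfolding asymptotic_sequence_def w_def using asymptotic_seq_inf[where a=a, OF a_nz order_refl] by blast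
  have P5: "\<not> bounded X \<longrightarrow>
      (let F = at_inf_within X;
           A = acf_expansion F f a b;
           B = (\<forall>n\<ge>1. \<exists>g. (g \<sim>[F] (\<lambda>z. a (n+1) / z))
                        \<and> (\<forall>\<^sub>F z in F. f z = cf_fun a b n (g z) z));
           C = (\<forall>n. (\<lambda>z. f z - rf_eval (w n) z)
                       \<sim>[F] (\<lambda>z. (\<Prod>k=1..n+1. a k) / z ^ (2*n+1)));
           D = (\<forall>n. (\<lambda>z. f z - rf_eval (w n) z) \<in> O[F](\<lambda>z. 1 / z ^ (2*n+1)));
           E = (infinite {n. (\<lambda>z. f z - rf_eval (w n) z) \<in> O[F](\<lambda>z. 1 / z ^ (2*n+1))});
           G = (\<forall>n. {v. rf_degree v \<le> n \<and>
                         (\<lambda>z. f z - rf_eval v z) \<in> O[F](\<lambda>z. 1 / z ^ (2*n+1))} = {w n});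
           H = (\<forall>n\<ge>1. pade_candidates F f n = {w n})
       in (A \<longleftrightarrow> B) \<and> (A \<longleftrightarrow> C) \<and> (A \<longleftrightarrow> D) \<and> (A \<longleftrightarrow> E)
          \<and> (A \<longleftrightarrow> G) \<and> (A \<longleftrightarrow> H)
          \<and> (A \<longrightarrow> {v. best_rat_approx F f v} = range w))"
    for X :: "complex set" and f :: "complex \<Rightarrow> complex"
  proof
    assume unb: "\<not> bounded X"
    define F where "F = at_inf_within X"
    have FL: "F \<le> at_infinity" unfolding F_def by (rule at_inf_within_le)
    have NB: "F \<noteq> bot" unfolding F_def by (rule at_inf_within_nbot[OF unb])
    define DD where "DD = (\<forall>n. (\<lambda>z. f z - rf_eval (approximant a b n) z) \<in> O[F](\<lambda>z. 1 / z ^ (2*n+1)))"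
    define CC where "CC = (\<forall>n. (\<lambda>z. f z - rf_eval (approximant a b n) z)
                       \<sim>[F] (\<lambda>z. (\<Prod>k=1..Suc n. a k) / z ^ (2*n+1)))"
    define EE where "EE = infinite {n. (\<lambda>z. f z - rf_eval (approximant a b n) z) \<in> O[F](\<lambda>z. 1 / z ^ (2*n+1))}"
    have E_D: "EE \<longleftrightarrow> DD"
    proof
      assume EE thus DD unfolding DD_def EE_def using E_to_O[where a=a, OF a_nz FL] by blast
    next
      assume DD
      hence "{n. (\<lambda>z. f z - rf_eval (approximant a b n) z) \<in> O[F](\<lambda>z. 1 / z ^ (2*n+1))} = UNIV"
        unfolding DD_def by blast
      thus EE unfolding EE_def by simp
    qed
    have D_C: "DD \<longleftrightarrow> CC"
    proof
      assume DD thus CC unfolding DD_def CC_def using O_to_C[where a=a, OF a_nz FL] by blast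
    next
      assume CC thus DD unfolding DD_def CC_def using C_to_O[where a=a, OF a_nz FL] by blast
    qed
    have A_D: "acf_expansion F f a b \<longleftrightarrow> DD"
    proof
      assume "acf_expansion F f a b" thus DD unfolding DD_def using A_to_O[where a=a, OF a_nz FL] by blast
    next
      assume DD hence CC using D_C by blast
      thus "acf_expansion F f a b" unfolding CC_def using C_to_A[where a=a and b=b and f=f and F=F, OF a_nz FL] by blast
    qed
    have B_D: "(\<forall>n\<ge>1. \<exists>g. (g \<sim>[F] (\<lambda>z. a (n+1) / z))
                        \<and> (\<forall>\<^sub>F z in F. f z = cf_fun a b n (g z) z)) \<longleftrightarrow> DD"
    proof
      assume BB: "\<forall>n\<ge>1. \<exists>g. (g \<sim>[F] (\<lambda>z. a (n+1) / z))
                        \<and> (\<forall>\<^sub>F z in F. f z = cf_fun a b n (g z) z)"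
      have hh: "(\<lambda>z. f z - rf_eval (approximant a b n) z) \<in> O[F](\<lambda>z. 1 / z ^ (2*n+1))" if n1: "n \<ge> 1" for n
      proof -
        obtain g where g1: "g \<sim>[F] (\<lambda>z. a (n+1) / z)" and g2: "\<forall>\<^sub>F z in F. f z = cf_fun a b n (g z) z"
          using BB n1 by blast
        show ?thesis by (rule C_to_O[where a=a, OF a_nz FL B_to_C[where a=a, OF a_nz FL NB n1 g1 g2]])
      qed
      have hn: "Suc m \<in> {n. (\<lambda>z. f z - rf_eval (approximant a b n) z) \<in> O[F](\<lambda>z. 1 / z ^ (2*n+1))}" for m
        using hh[of "Suc m"] by simp
      have EE unfolding EE_def infinite_nat_iff_unbounded_le
      proof (intro allI)
        fix m show "\<exists>n\<ge>m. n \<in> {n. (\<lambda>z. f z - rf_eval (approximant a b n) z) \<in> O[F](\<lambda>z. 1 / z ^ (2*n+1))}"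
          using hn[of m] by (intro exI[of _ "Suc m"]) simp
      qed
      thus DD using E_D by blast
    next
      assume DD hence CC using D_C by blast
      thus "\<forall>n\<ge>1. \<exists>g. (g \<sim>[F] (\<lambda>z. a (n+1) / z))
                        \<and> (\<forall>\<^sub>F z in F. f z = cf_fun a b n (g z) z)"
        unfolding CC_def using C_to_B[where a=a, OF a_nz FL NB] by blast
    qed
    have G_D: "(\<forall>n. {v. rf_degree v \<le> n \<and>
                         (\<lambda>z. f z - rf_eval v z) \<in> O[F](\<lambda>z. 1 / z ^ (2*n+1))} = {approximant a b n}) \<longleftrightarrow> DD"
    proof
      assume GG: "\<forall>n. {v. rf_degree v \<le> n \<and>
                         (\<lambda>z. f z - rf_eval v z) \<in> O[F](\<lambda>z. 1 / z ^ (2*n+1))} = {approximant a b n}"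
      show DD unfolding DD_def
      proof
        fix n
        have "approximant a b n \<in> {v. rf_degree v \<le> n \<and>
                         (\<lambda>z. f z - rf_eval v z) \<in> O[F](\<lambda>z. 1 / z ^ (2*n+1))}"
          using GG by blast
        thus "(\<lambda>z. f z - rf_eval (approximant a b n) z) \<in> O[F](\<lambda>z. 1 / z ^ (2*n+1))" by simp
      qed
    next
      assume DD thus "\<forall>n. {v. rf_degree v \<le> n \<and>
                         (\<lambda>z. f z - rf_eval v z) \<in> O[F](\<lambda>z. 1 / z ^ (2*n+1))} = {approximant a b n}"
        unfolding DD_def using D_to_G[where a=a, OF a_nz FL NB] by blast
    qed
    have H_D: "(\<forall>n\<ge>1. pade_candidates F f n = {approximant a b n}) \<longleftrightarrow> DD"
    proof
      assume "\<forall>n\<ge>1. pade_candidates F f n = {approximant a b n}"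
      hence EE unfolding EE_def using H_to_E[where a=a and b=b and f=f and F=F, OF a_nz FL NB] by blast
      thus DD using E_D by blast
    next
      assume DD thus "\<forall>n\<ge>1. pade_candidates F f n = {approximant a b n}"
        unfolding DD_def using D_to_H[where a=a, OF a_nz FL NB] by blast
    qed
    have BEST: "DD \<Longrightarrow> {v. best_rat_approx F f v} = range (approximant a b)"
      unfolding DD_def using best[where a=a and b=b and f=f and F=F, OF a_nz FL NB] by blast
    have CC': "CC \<longleftrightarrow> (\<forall>n. (\<lambda>z. f z - rf_eval (approximant a b n) z)
                       \<sim>[F] (\<lambda>z. (\<Prod>k=1..n+1. a k) / z ^ (2*n+1)))"
      unfolding CC_def by simp
    show "let F = at_inf_within X;
           A = acf_expansion F f a b;
           B = (\<forall>n\<ge>1. \<exists>g. (g \<sim>[F] (\<lambda>z. a (n+1) / z))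
                        \<and> (\<forall>\<^sub>F z in F. f z = cf_fun a b n (g z) z));
           C = (\<forall>n. (\<lambda>z. f z - rf_eval (w n) z)
                       \<sim>[F] (\<lambda>z. (\<Prod>k=1..n+1. a k) / z ^ (2*n+1)));
           D = (\<forall>n. (\<lambda>z. f z - rf_eval (w n) z) \<in> O[F](\<lambda>z. 1 / z ^ (2*n+1)));
           E = (infinite {n. (\<lambda>z. f z - rf_eval (w n) z) \<in> O[F](\<lambda>z. 1 / z ^ (2*n+1))});
           G = (\<forall>n. {v. rf_degree v \<le> n \<and>
                         (\<lambda>z. f z - rf_eval v z) \<in> O[F](\<lambda>z. 1 / z ^ (2*n+1))} = {w n});
           H = (\<forall>n\<ge>1. pade_candidates F f n = {w n})
       in (A \<longleftrightarrow> B) \<and> (A \<longleftrightarrow> C) \<and> (A \<longleftrightarrow> D) \<and> (A \<longleftrightarrow> E)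
          \<and> (A \<longleftrightarrow> G) \<and> (A \<longleftrightarrow> H)
          \<and> (A \<longrightarrow> {v. best_rat_approx F f v} = range w)"
      unfolding Let_def F_def[symmetric] w_def
      using A_D B_D D_C CC' E_D G_D H_D BEST
      unfolding DD_def EE_def by blast
  qed
  show ?thesis using P1 P2 P3 P4 P5 by blast
qed



end
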